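(* Let $K$ be a nonempty, compact and convex subset of a real Hausdorff locally convex topological vector space $X$, let $Y$ be a closed, convex, bounded and symmetric ($Y=-Y$) subset of a locally convex topological vector space, let $U\subseteq K$ be self-segment-dense in $K$ and suppose that $\operatorname{co}(U)$ is segment-dense in $K$. Let $f:K\times Y\to\mathbb R$ be bounded and satisfy: (i) for every $y\in Y$ the map $x\mapsto f(x,y)$ is convex and continuous on $K$; (ii) for every $x\in K$ the map $y\mapsto f(x,y)$ is affine and continuous on $Y$. Then $\{f(u,\cdot)\}_{u\in U}$ is dense in $\{f(x,\cdot)\}_{x\in K}$ in $B(Y)$; that is, for every $k\in K$ and $\varepsilon>0$ there exists $u\in U$ with $\sup_{y\in Y}|f(u,y)-f(k,y)|<\varepsilon$.
   Context: $B(Y)$ is the space of bounded real functions on $Y$ with the uniform norm. $\operatorname{co}$ is the convex hull. Affine: $f(x,(1-t)y_1+ty_2)=(1-t)f(x,y_1)+tf(x,y_2)$ for $y_1,y_2\in Y$, $t\in[0,1]$. $[x,y]=\{x+t(y-x):t\in[0,1]\}$. Self-segment-dense: for convex $V$ and $U\subseteq V$, $U$ is self-segment-dense in $V$ if $V\subseteq\operatorname{cl}U$ and for all $x,y\in U$, $[x,y]\cap U$ is dense in $[x,y]$. Segment-dense: for convex $V$ and $U\subseteq V$, $U$ is segment-dense in $V$ if for each $x\in V$ there is $y\in U$ such that $x$ is a cluster point of $[x,y]\cap U$. *)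

theory Defs
  imports "HOL-Analysis.Analysis"
begin

definition lctvs :: "'a::{real_vector,topological_space} itself \<Rightarrow> bool" where
  "lctvs _ \<longleftrightarrow>
     continuous_on UNIV (\<lambda>p::'a \<times> 'a. fst p + snd p) \<and>
     continuous_on UNIV (\<lambda>p::real \<times> 'a. fst p *\<^sub>R snd p) \<and>
     (\<forall>V::'a set. open V \<and> 0 \<in> V \<longrightarrow> (\<exists>W. open W \<and> convex W \<and> 0 \<in> W \<and> W \<subseteq> V))"

definition tvs_bounded :: "'a::{real_vector,topological_space} set \<Rightarrow> bool" where
  "tvs_bounded Y \<longleftrightarrow>
     (\<forall>V. open V \<and> 0 \<in> V \<longrightarrow> (\<exists>t>0. Y \<subseteq> (\<lambda>v. t *\<^sub>R v) ` V))"

definition self_segment_dense :: "'a::{real_vector,topological_space} set \<Rightarrow> 'a set \<Rightarrow> bool" where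
  "self_segment_dense U V \<longleftrightarrow> U \<subseteq> V \<and> V \<subseteq> closure U \<and>
     (\<forall>x\<in>U. \<forall>y\<in>U. closed_segment x y \<subseteq> closure (closed_segment x y \<inter> U))"

definition segment_dense :: "'a::{real_vector,topological_space} set \<Rightarrow> 'a set \<Rightarrow> bool" where
  "segment_dense U V \<longleftrightarrow> U \<subseteq> V \<and>
     (\<forall>x\<in>V. \<exists>y\<in>U. x islimpt (closed_segment x y \<inter> U))"

definition affine_on :: "'b::real_vector set \<Rightarrow> ('b \<Rightarrow> real) \<Rightarrow> bool" where
  "affine_on Y g \<longleftrightarrow> (\<forall>y1\<in>Y. \<forall>y2\<in>Y. \<forall>t::real. 0 \<le> t \<and> t \<le> 1 \<longrightarrow>
     g ((1 - t) *\<^sub>R y1 + t *\<^sub>R y2) = (1 - t) * g y1 + t * g y2)"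

end

theory Submission
  imports Defs
begin


lemma lc_add:
  fixes f g :: "'c::topological_space \<Rightarrow> 'a::{real_vector,topological_space}"
  assumes "lctvs TYPE('a)" "continuous_on S f" "continuous_on S g"
  shows "continuous_on S (\<lambda>x. f x + g x)"
proof -
  have c: "continuous_on UNIV (\<lambda>p::'a \<times> 'a. fst p + snd p)" using assms(1) by (simp add: lctvs_def)
  have "continuous_on S (\<lambda>x. (f x, g x))" by (intro continuous_on_Pair assms)
  from continuous_on_compose2[OF c this] show ?thesis by simp
qed

lemma lc_scale:
  fixes f :: "'c::topological_space \<Rightarrow> real" and g :: "'c \<Rightarrow> 'a::{real_vector,topological_space}"
  assumes "lctvs TYPE('a)" "continuous_on S f" "continuous_on S g"
  shows "continuous_on S (\<lambda>x. f x *\<^sub>R g x)"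
proof -
  have c: "continuous_on UNIV (\<lambda>p::real \<times> 'a. fst p *\<^sub>R snd p)" using assms(1) by (simp add: lctvs_def)
  have "continuous_on S (\<lambda>x. (f x, g x))" by (intro continuous_on_Pair assms)
  from continuous_on_compose2[OF c this] show ?thesis by simp
qed

lemma seg_param:
  fixes a b :: "'a::{real_vector,t2_space}"
  assumes lc: "lctvs TYPE('a)" and ab: "a \<noteq> b" and eta: "\<eta> > 0"
  shows "\<exists>N. open N \<and> (1 - c0) *\<^sub>R a + c0 *\<^sub>R b \<in> N \<and>
     (\<forall>c. 0 \<le> c \<and> c \<le> 1 \<and> (1 - c) *\<^sub>R a + c *\<^sub>R b \<in> N \<longrightarrow> \<bar>c - c0\<bar> < \<eta>)"
proof -
  define \<phi> where "\<phi> = (\<lambda>c::real. (1 - c) *\<^sub>R a + c *\<^sub>R b)"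
  have cont: "continuous_on UNIV \<phi>" unfolding \<phi>_def
    by (intro lc_add[OF lc] lc_scale[OF lc] continuous_intros)
  define C where "C = {0..1::real} \<inter> {c. \<eta> \<le> \<bar>c - c0\<bar>}"
  have "closed {c::real. \<eta> \<le> \<bar>c - c0\<bar>}"
    by (intro closed_Collect_le continuous_intros)
  hence "compact C" unfolding C_def by (intro compact_Int_closed) auto
  hence "compact (\<phi> ` C)" by (intro compact_continuous_image continuous_on_subset[OF cont]) auto
  hence cl: "closed (\<phi> ` C)" by (rule compact_imp_closed)
  have inj: "\<phi> c = \<phi> c' \<Longrightarrow> c = c'" for c c'
  proof -
    assume "\<phi> c = \<phi> c'"
    hence "(c - c') *\<^sub>R (b - a) = 0" unfolding \<phi>_def by (simp add: algebra_simps)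
    thus ?thesis using ab by simp
  qed
  have "\<phi> c0 \<notin> \<phi> ` C" using inj eta unfolding C_def by force
  show ?thesis
    apply (rule exI[of _ "- (\<phi> ` C)"])
    using cl \<open>\<phi> c0 \<notin> \<phi> ` C\<close> unfolding C_def \<phi>_def by (force simp: open_Compl not_le)
qed



definition near :: "'a::real_vector set \<Rightarrow> real \<Rightarrow> 'a \<Rightarrow> 'a \<Rightarrow> bool" where
  "near K s x x' \<longleftrightarrow> (\<exists>\<sigma> p. 0 \<le> \<sigma> \<and> \<sigma> \<le> s \<and> \<sigma> \<le> 1 \<and> p \<in> K \<and> x' = (1 - \<sigma>) *\<^sub>R x + \<sigma> *\<^sub>R p)"

lemma near_refl: "0 \<le> s \<Longrightarrow> x \<in> K \<Longrightarrow> near K s x x"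
  unfolding near_def by (rule exI[of _ 0]) auto

lemma near_mono: "near K s x x' \<Longrightarrow> s \<le> s' \<Longrightarrow> near K s' x x'"
  unfolding near_def by force

lemma near_in: "convex K \<Longrightarrow> x \<in> K \<Longrightarrow> near K s x x' \<Longrightarrow> x' \<in> K"
  unfolding near_def by (auto simp: convex_alt)

lemma near_trans:
  assumes K: "convex K" and x: "x \<in> K" and n1: "near K r x x'" and n2: "near K s x' x''"
  shows "near K (r + s) x x''"
proof -
  obtain \<sigma>1 p where h1: "0 \<le> \<sigma>1" "\<sigma>1 \<le> r" "\<sigma>1 \<le> 1" "p \<in> K" "x' = (1 - \<sigma>1) *\<^sub>R x + \<sigma>1 *\<^sub>R p"
    using n1 unfolding near_def by blast
  obtain \<sigma>2 q where h2: "0 \<le> \<sigma>2" "\<sigma>2 \<le> s" "\<sigma>2 \<le> 1" "q \<in> K" "x'' = (1 - \<sigma>2) *\<^sub>R x' + \<sigma>2 *\<^sub>R q"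
    using n2 unfolding near_def by blast
  define \<sigma> where "\<sigma> = 1 - (1 - \<sigma>1) * (1 - \<sigma>2)"
  have pr: "0 \<le> (1 - \<sigma>1) * (1 - \<sigma>2)" "(1 - \<sigma>1) * (1 - \<sigma>2) \<le> 1" "0 \<le> \<sigma>1 * \<sigma>2"
    using h1 h2 by (auto intro!: mult_nonneg_nonneg mult_le_one)
  have se: "\<sigma> = \<sigma>1 + \<sigma>2 - \<sigma>1 * \<sigma>2" by (simp add: \<sigma>_def algebra_simps)
  have s0: "0 \<le> \<sigma>" "\<sigma> \<le> 1" "\<sigma> \<le> r + s" using se h1(1,2) h2(1,2) pr unfolding \<sigma>_def
    by linarith+
  have eq: "x'' = (1 - \<sigma>) *\<^sub>R x + (((1 - \<sigma>2) * \<sigma>1) *\<^sub>R p + \<sigma>2 *\<^sub>R q)"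
    unfolding h2(5) h1(5) \<sigma>_def by (simp add: algebra_simps)
  show ?thesis
  proof (cases "\<sigma> = 0")
    case True
    hence "\<sigma>1 + \<sigma>2 = \<sigma>1 * \<sigma>2" unfolding \<sigma>_def by (simp add: algebra_simps)
    moreover have "\<sigma>1 * \<sigma>2 \<le> \<sigma>1" using h1 h2 by (simp add: mult_left_le)
    moreover have "\<sigma>1 * \<sigma>2 \<le> \<sigma>2" using h1 h2 by (simp add: mult_left_le_one_le)
    ultimately have "\<sigma>2 = 0" "\<sigma>1 = 0" using h1 h2 by linarith+
    thus ?thesis using h1 h2 x unfolding near_def
      by (intro exI[of _ 0] exI[of _ x]) (auto intro: add_nonneg_nonneg)
  next
    case False
    hence sp: "\<sigma> > 0" using s0 by simp
    define pp where "pp = (((1 - \<sigma>2) * \<sigma>1) / \<sigma>) *\<^sub>R p + (\<sigma>2 / \<sigma>) *\<^sub>R q"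
    have "pp \<in> K" unfolding pp_def
    proof (rule convexD[OF K h1(4) h2(4)])
      show "0 \<le> (1 - \<sigma>2) * \<sigma>1 / \<sigma>" using sp h1 h2 by simp
      show "0 \<le> \<sigma>2 / \<sigma>" using sp h2 by simp
      have "(1 - \<sigma>2) * \<sigma>1 + \<sigma>2 = \<sigma>" using se by (simp add: algebra_simps)
      thus "(1 - \<sigma>2) * \<sigma>1 / \<sigma> + \<sigma>2 / \<sigma> = 1" using sp by (simp add: add_divide_distrib[symmetric])
    qed
    moreover have "\<sigma> *\<^sub>R pp = ((1 - \<sigma>2) * \<sigma>1) *\<^sub>R p + \<sigma>2 *\<^sub>R q"
      unfolding pp_def using sp by (simp add: scaleR_add_right)
    ultimately show ?thesis unfolding near_def using s0 eq by metis
  qed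
qed

lemma near_push:
  assumes K: "convex K" and a: "a \<in> K" and t: "0 \<le> t" "t \<le> 1" and n: "near K s z w"
  shows "near K s ((1 - t) *\<^sub>R a + t *\<^sub>R z) ((1 - t) *\<^sub>R a + t *\<^sub>R w)"
proof -
  obtain \<sigma> p where h: "0 \<le> \<sigma>" "\<sigma> \<le> s" "\<sigma> \<le> 1" "p \<in> K" "w = (1 - \<sigma>) *\<^sub>R z + \<sigma> *\<^sub>R p"
    using n unfolding near_def by blast
  have "(1 - t) *\<^sub>R a + t *\<^sub>R p \<in> K" using K a h(4) t by (simp add: convex_alt)
  moreover have "(1 - t) *\<^sub>R a + t *\<^sub>R w = (1 - \<sigma>) *\<^sub>R ((1 - t) *\<^sub>R a + t *\<^sub>R z) + \<sigma> *\<^sub>R ((1 - t) *\<^sub>R a + t *\<^sub>R p)"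
    unfolding h(5) by (simp add: algebra_simps)
  ultimately show ?thesis unfolding near_def using h by blast
qed

lemma near_bound:
  assumes cv: "convex_on K g" and x: "x \<in> K" and B: "\<And>z. z \<in> K \<Longrightarrow> \<bar>g z\<bar> \<le> B"
    and n: "near K s x x'"
  shows "g x' - g x \<le> 2 * B * s"
proof -
  obtain \<sigma> p where h: "0 \<le> \<sigma>" "\<sigma> \<le> s" "\<sigma> \<le> 1" "p \<in> K" "x' = (1 - \<sigma>) *\<^sub>R x + \<sigma> *\<^sub>R p"
    using n unfolding near_def by blast
  have "g x' \<le> (1 - \<sigma>) * g x + \<sigma> * g p" unfolding h(5) using convex_onD[OF cv] h x by blast
  moreover have "\<sigma> * (g p - g x) \<le> \<sigma> * (2 * B)" using B[OF x] B[OF h(4)] h(1)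
    by (intro mult_left_mono) auto
  moreover have "\<sigma> * (2*B) \<le> s * (2 * B)" using h B[OF x] by (intro mult_right_mono) auto
  ultimately show ?thesis by (simp add: algebra_simps)
qed



lemma comb_eq:
  fixes u v :: "'a::real_vector"
  shows "(1 - \<sigma>) *\<^sub>R ((1 - a) *\<^sub>R u + a *\<^sub>R v) + \<sigma> *\<^sub>R v = (1 - ((1 - \<sigma>) * a + \<sigma>)) *\<^sub>R u + ((1 - \<sigma>) * a + \<sigma>) *\<^sub>R v"
    "(1 - \<sigma>) *\<^sub>R ((1 - a) *\<^sub>R u + a *\<^sub>R v) + \<sigma> *\<^sub>R u = (1 - (1 - \<sigma>) * a) *\<^sub>R u + ((1 - \<sigma>) * a) *\<^sub>R v"
  by (simp_all add: algebra_simps)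

lemma near_seg1:
  fixes u v :: "'a::real_vector"
  assumes "0 \<le> a" "a \<le> b" "b \<le> 1" "a < 1" "b - a \<le> s * (1 - a)" "v \<in> K"
  shows "near K s ((1 - a) *\<^sub>R u + a *\<^sub>R v) ((1 - b) *\<^sub>R u + b *\<^sub>R v)"
proof -
  define \<sigma> where "\<sigma> = (b - a) / (1 - a)"
  have "\<sigma> * (1 - a) = b - a" using assms unfolding \<sigma>_def by simp
  hence c: "(1 - \<sigma>) * a + \<sigma> = b" by (simp add: algebra_simps)
  have "0 \<le> \<sigma>" "\<sigma> \<le> s" "\<sigma> \<le> 1" using assms unfolding \<sigma>_def by (simp_all add: field_simps)
  thus ?thesis unfolding near_def using assms(6) comb_eq(1)[of \<sigma> a u v, unfolded c]
    by metis
qed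

lemma near_seg2:
  fixes u v :: "'a::real_vector"
  assumes "0 \<le> a" "a \<le> b" "b \<le> 1" "0 < b" "b - a \<le> s * b" "u \<in> K"
  shows "near K s ((1 - b) *\<^sub>R u + b *\<^sub>R v) ((1 - a) *\<^sub>R u + a *\<^sub>R v)"
proof -
  define \<sigma> where "\<sigma> = (b - a) / b"
  have "\<sigma> * b = b - a" using assms unfolding \<sigma>_def by simp
  hence c: "(1 - \<sigma>) * b = a" by (simp add: algebra_simps)
  have "0 \<le> \<sigma>" "\<sigma> \<le> s" "\<sigma> \<le> 1" using assms unfolding \<sigma>_def by (simp_all add: field_simps)
  thus ?thesis unfolding near_def using assms(6) comb_eq(2)[of \<sigma> b u v, unfolded c]
    by metis
qed

lemma near_seg_both:
  fixes u v :: "'a::real_vector"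
  assumes "0 < a" "a < 1" "0 \<le> b" "b \<le> 1" "\<bar>b - a\<bar> < s * min a (1 - a)" "u \<in> K" "v \<in> K"
  shows "near K s ((1 - a) *\<^sub>R u + a *\<^sub>R v) ((1 - b) *\<^sub>R u + b *\<^sub>R v) \<and>
         near K s ((1 - b) *\<^sub>R u + b *\<^sub>R v) ((1 - a) *\<^sub>R u + a *\<^sub>R v)"
proof (cases "a \<le> b")
  case True
  have s0: "0 \<le> s" using assms by (smt (verit) min_def mult_nonpos_nonneg)
  have m1: "s * min a (1 - a) \<le> s * (1 - a)" "s * min a (1 - a) \<le> s * a" "s * a \<le> s * b"
    using s0 True by (simp_all add: mult_left_mono)
  show ?thesis using assms True m1
    by (intro conjI near_seg1 near_seg2) auto
next
  case False
  have s0: "0 \<le> s" using assms by (smt (verit) min_def mult_nonpos_nonneg)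
  have m1: "s * min a (1 - a) \<le> s * (1 - a)" "s * min a (1 - a) \<le> s * a" "s * (1 - a) \<le> s * (1 - b)"
    using s0 False by (simp_all add: mult_left_mono)
  have e: "(1 - c) *\<^sub>R u + c *\<^sub>R v = (1 - (1 - c)) *\<^sub>R v + (1 - c) *\<^sub>R u" for c by simp
  show ?thesis unfolding e[of a] e[of b] using assms False m1
    by (intro conjI near_seg1 near_seg2) auto
qed

lemma seg_approx:
  fixes K U :: "'a::{real_vector,t2_space} set"
  assumes lc: "lctvs TYPE('a)" and UK: "U \<subseteq> K"
    and ssd: "\<forall>x\<in>U. \<forall>y\<in>U. closed_segment x y \<subseteq> closure (closed_segment x y \<inter> U)"
    and u1: "u1 \<in> U" and u2: "u2 \<in> U" and z: "z \<in> closed_segment u1 u2" and s: "s > 0"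
  shows "\<exists>w\<in>U. near K s z w \<and> near K s w z"
proof -
  obtain a where a: "0 \<le> a" "a \<le> 1" "z = (1 - a) *\<^sub>R u1 + a *\<^sub>R u2"
    using z unfolding closed_segment_def by blast
  have zU: "z \<in> U \<Longrightarrow> ?thesis" using UK s by (intro bexI[of _ z]) (auto intro: near_refl)
  show ?thesis
  proof (cases "u1 = u2 \<or> a = 0 \<or> a = 1")
    case True
    hence "z \<in> U" using a u1 u2 by (auto simp: algebra_simps)
    thus ?thesis by (rule zU)
  next
    case False
    hence ne: "u1 \<noteq> u2" and a': "0 < a" "a < 1" using a by auto
    have eta: "s * min a (1 - a) > 0" using a' s by simp
    obtain N where N: "open N" "z \<in> N"
      "\<And>c. 0 \<le> c \<Longrightarrow> c \<le> 1 \<Longrightarrow> (1 - c) *\<^sub>R u1 + c *\<^sub>R u2 \<in> N \<Longrightarrow> \<bar>c - a\<bar> < s * min a (1 - a)"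
      using seg_param[OF lc ne eta, of a] a(3) by blast
    have "z \<in> closure (closed_segment u1 u2 \<inter> U)" using ssd u1 u2 z by blast
    hence "N \<inter> (closed_segment u1 u2 \<inter> U) \<noteq> {}" using open_Int_closure_eq_empty[OF N(1)] N(2) by blast
    then obtain w where w: "w \<in> N" "w \<in> closed_segment u1 u2" "w \<in> U" by blast
    then obtain b where b: "0 \<le> b" "b \<le> 1" "w = (1 - b) *\<^sub>R u1 + b *\<^sub>R u2"
      unfolding closed_segment_def by blast
    have "\<bar>b - a\<bar> < s * min a (1 - a)" using N(3)[OF b(1,2)] w(1) b(3) by simp
    from near_seg_both[OF a' b(1,2) this, where K=K] u1 u2 UK a(3) b(3) w(3) show ?thesis by blast
  qed
qed



lemma hull_approx:
  fixes K U :: "'a::{real_vector,t2_space} set"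
  assumes lc: "lctvs TYPE('a)" and UK: "U \<subseteq> K" and K: "convex K"
    and ssd: "\<forall>x\<in>U. \<forall>y\<in>U. closed_segment x y \<subseteq> closure (closed_segment x y \<inter> U)"
  shows "\<forall>x\<in>convex hull U. \<forall>s>0. \<exists>u\<in>U. near K s x u \<and> near K s u x"
proof -
  define P where "P = {x\<in>K. \<forall>s>0. \<exists>u\<in>U. near K s x u \<and> near K s u x}"
  have "U \<subseteq> P" unfolding P_def using UK
    by (auto intro!: near_refl bexI[where P="\<lambda>u. near K _ _ u \<and> near K _ u _"])
  moreover have "convex P" unfolding convex_alt
  proof (intro ballI allI impI)
    fix x1 x2 and t :: real
    assume x1: "x1 \<in> P" and x2: "x2 \<in> P" and t: "0 \<le> t \<and> t \<le> 1"
    have x1K: "x1 \<in> K" and x2K: "x2 \<in> K" using x1 x2 unfolding P_def by auto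
    let ?z = "(1 - t) *\<^sub>R x1 + t *\<^sub>R x2"
    have zK: "?z \<in> K" using K x1K x2K t by (simp add: convex_alt)
    show "?z \<in> P" unfolding P_def
    proof (intro CollectI conjI zK allI impI)
      fix s :: real assume s: "s > 0"
      hence s4: "s/4 > 0" by simp
      obtain w1 where w1: "w1 \<in> U" "near K (s/4) x1 w1" "near K (s/4) w1 x1"
        using x1 s4 unfolding P_def by blast
      obtain w2 where w2: "w2 \<in> U" "near K (s/4) x2 w2" "near K (s/4) w2 x2"
        using x2 s4 unfolding P_def by blast
      have w1K: "w1 \<in> K" and w2K: "w2 \<in> K" using w1 w2 UK by auto
      let ?z1 = "(1 - t) *\<^sub>R x1 + t *\<^sub>R w2"
      let ?z2 = "(1 - t) *\<^sub>R w1 + t *\<^sub>R w2"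
      have a1: "near K (s/4) ?z ?z1" "near K (s/4) ?z1 ?z"
        using near_push[OF K x1K _ _ w2(2)] near_push[OF K x1K _ _ w2(3)] t by auto
      have e: "(1 - t) *\<^sub>R y + t *\<^sub>R w2 = (1 - (1 - t)) *\<^sub>R w2 + (1 - t) *\<^sub>R y" for y by simp
      have a2: "near K (s/4) ?z1 ?z2" "near K (s/4) ?z2 ?z1"
        unfolding e[of x1] e[of w1]
        by (rule near_push[OF K w2K _ _ w1(2)]; use t in simp)
           (rule near_push[OF K w2K _ _ w1(3)]; use t in simp)
      have "?z2 \<in> closed_segment w1 w2" unfolding closed_segment_def using t by blast
      then obtain u where u: "u \<in> U" "near K (s/4) ?z2 u" "near K (s/4) u ?z2"
        using seg_approx[OF lc UK ssd w1(1) w2(1) _ s4] by blast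
      have z1K: "?z1 \<in> K" using near_in[OF K zK a1(1)] .
      have z2K: "?z2 \<in> K" using near_in[OF K z1K a2(1)] .
      have uK: "u \<in> K" using u UK by auto
      have "near K (s/4 + s/4 + s/4) ?z u"
        by (rule near_trans[OF K zK near_trans[OF K zK a1(1) a2(1)] u(2)])
      moreover have "near K (s/4 + s/4 + s/4) u ?z"
        by (rule near_trans[OF K uK near_trans[OF K uK u(3) a2(2)] a1(2)])
      ultimately show "\<exists>u\<in>U. near K s ?z u \<and> near K s u ?z"
        using u(1) s near_mono[of K "s/4 + s/4 + s/4" _ _ s] by auto
    qed
  qed
  ultimately have "convex hull U \<subseteq> P" by (rule hull_minimal)
  thus ?thesis unfolding P_def by blast
qed



theorem mainTheorem18:
  fixes K U :: "'a::{real_vector,t2_space} set"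
    and Y :: "'b::{real_vector,topological_space} set"
    and f :: "'a \<Rightarrow> 'b \<Rightarrow> real"
  assumes X_lc: "lctvs TYPE('a)"
    and Y_lc: "lctvs TYPE('b)"
    and K_ne: "K \<noteq> {}" and K_compact: "compact K" and K_convex: "convex K"
    and Y_closed: "closed Y" and Y_convex: "convex Y" and Y_bounded: "tvs_bounded Y"
    and Y_sym: "uminus ` Y = Y"
    and U_ssd: "self_segment_dense U K"
    and coU_sd: "segment_dense (convex hull U) K"
    and f_bounded: "\<exists>B. \<forall>x\<in>K. \<forall>y\<in>Y. \<bar>f x y\<bar> \<le> B"
    and f_convex: "\<And>y. y \<in> Y \<Longrightarrow> convex_on K (\<lambda>x. f x y)"
    and f_cont1: "\<And>y. y \<in> Y \<Longrightarrow> continuous_on K (\<lambda>x. f x y)"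
    and f_affine: "\<And>x. x \<in> K \<Longrightarrow> affine_on Y (f x)"
    and f_cont2: "\<And>x. x \<in> K \<Longrightarrow> continuous_on Y (f x)"
  shows "\<forall>k\<in>K. \<forall>\<epsilon>>0. \<exists>u\<in>U. \<exists>\<delta><\<epsilon>. \<forall>y\<in>Y. \<bar>f u y - f k y\<bar> \<le> \<delta>"
proof (intro ballI allI impI)
  fix k and \<epsilon> :: real
  assume k: "k \<in> K" and e: "\<epsilon> > 0"
  have UK: "U \<subseteq> K" and KU: "K \<subseteq> closure U"
    and ssd: "\<forall>x\<in>U. \<forall>y\<in>U. closed_segment x y \<subseteq> closure (closed_segment x y \<inter> U)"
    using U_ssd unfolding self_segment_dense_def by auto
  obtain B0 where B0: "\<forall>x\<in>K. \<forall>y\<in>Y. \<bar>f x y\<bar> \<le> B0" using f_bounded by blast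
  define B where "B = \<bar>B0\<bar> + 1"
  have Bp: "B > 0" unfolding B_def by simp
  have Bb: "\<And>x y. x \<in> K \<Longrightarrow> y \<in> Y \<Longrightarrow> \<bar>f x y\<bar> \<le> B" using B0 unfolding B_def by force
  show "\<exists>u\<in>U. \<exists>\<delta><\<epsilon>. \<forall>y\<in>Y. \<bar>f u y - f k y\<bar> \<le> \<delta>"
  proof (cases "Y = {}")
    case True
    have "U \<noteq> {}" using KU K_ne by auto
    then obtain u where "u \<in> U" by blast
    thus ?thesis using True e by auto
  next
    case False
    then obtain y1 where y1: "y1 \<in> Y" by blast
    have negY: "\<And>y. y \<in> Y \<Longrightarrow> - y \<in> Y" using Y_sym by force
    have "(1/2) *\<^sub>R y1 + (1/2) *\<^sub>R (- y1) \<in> Y"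
      by (rule convexD[OF Y_convex y1 negY[OF y1]]) auto
    hence Y0: "0 \<in> Y" by simp
    have mid: "f x (- y) = 2 * f x 0 - f x y" if x: "x \<in> K" and y: "y \<in> Y" for x y
    proof -
      have "\<forall>t. 0 \<le> t \<and> t \<le> 1 \<longrightarrow> f x ((1 - t) *\<^sub>R y + t *\<^sub>R (- y)) = (1 - t) * f x y + t * f x (- y)"
        using f_affine[OF x] y negY[OF y] unfolding affine_on_def by blast
      from this[rule_format, of "1/2"] show ?thesis by simp
    qed
    define g where "g = (\<lambda>x. f x 0)"
    have gc: "continuous_on K g" unfolding g_def using f_cont1[OF Y0] .
    define \<eta> where "\<eta> = \<epsilon> / (8 * B)"
    have eta: "\<eta> > 0" unfolding \<eta>_def using e Bp by simp
    have Beta: "2 * B * \<eta> = \<epsilon> / 4" unfolding \<eta>_def using Bp by simp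
    have coK: "convex hull U \<subseteq> K" using UK K_convex by (simp add: hull_minimal)
    obtain y0 where y0: "y0 \<in> convex hull U" "k islimpt (closed_segment k y0 \<inter> convex hull U)"
      using coU_sd k unfolding segment_dense_def by blast
    have y0K: "y0 \<in> K" using y0(1) coK by auto
    have "\<exists>x\<in>convex hull U. near K \<eta> k x \<and> \<bar>g x - g k\<bar> < \<epsilon>/8"
    proof (cases "k = y0")
      case True
      thus ?thesis using y0(1) k eta e by (intro bexI[of _ k]) (auto intro: near_refl)
    next
      case False
      obtain A where A: "open A" "k \<in> A" "\<And>z. z \<in> K \<Longrightarrow> z \<in> A \<Longrightarrow> g z \<in> ball (g k) (\<epsilon>/8)"
        using gc k e unfolding continuous_on_topological
        by (metis centre_in_ball open_ball divide_pos_pos zero_less_numeral)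
      obtain N where N: "open N" "(1 - 0) *\<^sub>R k + 0 *\<^sub>R y0 \<in> N"
        "\<And>c. 0 \<le> c \<Longrightarrow> c \<le> 1 \<Longrightarrow> (1 - c) *\<^sub>R k + c *\<^sub>R y0 \<in> N \<Longrightarrow> \<bar>c - 0\<bar> < \<eta>"
        using seg_param[OF X_lc False eta, of 0] by blast
      have "k \<in> A \<inter> N" using A N by simp
      then obtain x where x: "x \<in> closed_segment k y0" "x \<in> convex hull U" "x \<in> A \<inter> N"
        using y0(2) A(1) N(1) unfolding islimpt_def by (meson IntE open_Int)
      obtain c where c: "0 \<le> c" "c \<le> 1" "x = (1 - c) *\<^sub>R k + c *\<^sub>R y0"
        using x(1) unfolding closed_segment_def by blast
      have "c < \<eta>" using N(3)[OF c(1,2)] x(3) c(3) by simp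
      hence "near K \<eta> k x" unfolding near_def using c y0K by (intro exI[of _ c] exI[of _ y0]) auto
      moreover have "\<bar>g x - g k\<bar> < \<epsilon>/8" using A(3)[of x] x coK by (auto simp: dist_real_def abs_minus_commute)
      ultimately show ?thesis using x(2) by blast
    qed
    then obtain x where x: "x \<in> convex hull U" "near K \<eta> k x" "\<bar>g x - g k\<bar> < \<epsilon>/8" by blast
    have xK: "x \<in> K" using x(1) coK by auto
    obtain u where u: "u \<in> U" "near K \<eta> x u" "near K \<eta> u x"
      using hull_approx[OF X_lc UK K_convex ssd] x(1) eta by blast
    have uK: "u \<in> K" using u(1) UK by auto
    have "\<forall>y\<in>Y. \<bar>f u y - f k y\<bar> \<le> 3 * \<epsilon> / 4"
    proof
      fix y assume y: "y \<in> Y"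
      have ny: "- y \<in> Y" using negY[OF y] .
      have b1: "\<And>z. z \<in> K \<Longrightarrow> \<bar>f z y\<bar> \<le> B" using Bb y by blast
      have b2: "\<And>z. z \<in> K \<Longrightarrow> \<bar>f z (-y)\<bar> \<le> B" using Bb ny by blast
      have A1: "f x y - f k y \<le> 2 * B * \<eta>"
        using near_bound[OF f_convex[OF y] k b1 x(2)] .
      have A2: "f x (-y) - f k (-y) \<le> 2 * B * \<eta>"
        using near_bound[OF f_convex[OF ny] k b2 x(2)] .
      have C1: "f u y - f x y \<le> 2 * B * \<eta>"
        using near_bound[OF f_convex[OF y] xK b1 u(2)] .
      have C2: "f x y - f u y \<le> 2 * B * \<eta>"
        using near_bound[OF f_convex[OF y] uK b1 u(3)] .
      have "f x (-y) = 2 * g x - f x y" "f k (-y) = 2 * g k - f k y"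
        using mid[OF xK y] mid[OF k y] unfolding g_def by auto
      thus "\<bar>f u y - f k y\<bar> \<le> 3 * \<epsilon> / 4" using A1 A2 C1 C2 Beta x(3) unfolding abs_le_iff abs_less_iff by linarith
    qed
    thus ?thesis using u(1) e by (intro bexI[of _ u] exI[of _ "3 * \<epsilon> / 4"]) auto
  qed
qed


end
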